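(* Let $2<\alpha<4$ and $c\ge1$. For $N_1>0$ set $N_2=cN_1$, and let $(\Lambda_1^*,\Lambda_2^* )$ be the Nash equilibrium of the two-player Variable-Rate Random Access Game in which player $i\in\{1,2\}$ chooses $\Lambda_i\in[0,N_i]$ and receives payoff \[ U_i(\Lambda_1,\Lambda_2)=\Lambda_i\int_0^\infty e^{-(\Lambda_1+\Lambda_2)x^{2/\alpha}}\frac{dx}{1+x}. \] Then, in the limit $N_1\to\infty$, the equilibrium is \[ (\Lambda_1^*,\Lambda_2^* )=\begin{cases}(N_1,N_2), & N_1\le N_2\le \frac{2}{\alpha-2}N_1,\\[2pt] \left(N_1,\frac{2}{\alpha-2}N_1\right), & \frac{2}{\alpha-2}N_1\le N_2,\end{cases} \] in the sense that $\Lambda_1^*=N_1$ and $\Lambda_2^*/N_1\to\min\!\left(c,\frac{2}{\alpha-2}\right)$ as $N_1\to\infty$.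
   Context: A Nash equilibrium is a pair $(\Lambda_1^*,\Lambda_2^* )\in[0,N_1]\times[0,N_2]$ such that $\Lambda_1^*$ maximizes $U_1(\cdot,\Lambda_2^* )$ over $[0,N_1]$ and $\Lambda_2^*$ maximizes $U_2(\Lambda_1^*,\cdot)$ over $[0,N_2]$. *)

theory Defs
  imports "HOL-Analysis.Analysis"
begin

definition vr_integral :: "real \<Rightarrow> real \<Rightarrow> real" where
  "vr_integral \<alpha> s = integral {0<..} (\<lambda>x. exp (- s * x powr (2 / \<alpha>)) / (1 + x))"

definition vr_U1 :: "real \<Rightarrow> real \<Rightarrow> real \<Rightarrow> real" where
  "vr_U1 \<alpha> L1 L2 = L1 * vr_integral \<alpha> (L1 + L2)"

definition vr_U2 :: "real \<Rightarrow> real \<Rightarrow> real \<Rightarrow> real" where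
  "vr_U2 \<alpha> L1 L2 = L2 * vr_integral \<alpha> (L1 + L2)"

definition vr_nash :: "real \<Rightarrow> real \<Rightarrow> real \<Rightarrow> real \<Rightarrow> real \<Rightarrow> bool" where
  "vr_nash \<alpha> N1 N2 L1 L2 \<longleftrightarrow>
     L1 \<in> {0..N1} \<and> L2 \<in> {0..N2} \<and>
     (\<forall>M\<in>{0..N1}. vr_U1 \<alpha> M L2 \<le> vr_U1 \<alpha> L1 L2) \<and>
     (\<forall>M\<in>{0..N2}. vr_U2 \<alpha> L1 M \<le> vr_U2 \<alpha> L1 L2)"

end

theory Submission imports Defs begin

lemma exp_pow6_bound:
  fixes t :: real assumes "t \<ge> 0" shows "exp (-t) * t^6 \<le> 46656"
proof -
  have "t/6 \<le> exp (t/6)" using exp_ge_add_one_self[of "t/6"] by linarith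
  hence "(t/6)^6 \<le> exp (t/6)^6" using assms by (intro power_mono) auto
  also have "\<dots> = exp t" using exp_of_nat_mult[of 6 "t/6"] by simp
  finally have "t^6 \<le> 46656 * exp t" by (simp add: power_divide)
  hence "exp (-t) * t^6 \<le> exp (-t) * (46656 * exp t)" by (intro mult_left_mono) auto
  also have "\<dots> = 46656" by (simp add: exp_minus field_simps)
  finally show ?thesis .
qed

lemma base_integrable:
  fixes f :: "real \<Rightarrow> real" and d :: real
  assumes d: "d \<ge> 1/2" and cf: "continuous_on {0..} f"
    and bd: "\<And>y. y \<ge> 0 \<Longrightarrow> \<bar>f y\<bar> \<le> (1+y) * exp (-(y powr d))"
  shows "f integrable_on {0<..}"
proof -
  have i1: "f integrable_on {0..1}"
    by (rule integrable_continuous_interval, rule continuous_on_subset[OF cf]) auto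
  have "(\<lambda>y::real. y powr (-2)) integrable_on {1..}"
    using has_integral_powr_to_inf[of "-2" 1] by (auto simp: integrable_on_def)
  hence gi: "(\<lambda>y::real. 93312 * y powr (-2)) integrable_on {1..}"
    using integrable_cmul[of _ _ 93312] by simp
  have meas: "f \<in> borel_measurable (lebesgue_on {1..})"
    by (rule continuous_imp_measurable_on_sets_lebesgue, rule continuous_on_subset[OF cf]) auto
  have bnd: "\<bar>f y\<bar> \<le> 93312 * y powr (-2)" if y: "y \<in> {1..}" for y
  proof -
    from y have y1: "y \<ge> 1" by simp
    define u where "u = y powr d"
    have u0: "u \<ge> 0" by (simp add: u_def)
    have "u^6 = y powr (6*d)" unfolding u_def using y1
      by (simp add: powr_realpow[symmetric] powr_powr mult.commute)
    also have "\<dots> \<ge> y powr 3" using y1 d by (intro powr_mono) auto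
    finally have u6: "y^3 \<le> u^6" using y1 by (simp add: powr_realpow)
    have y3: "y^3 > 0" using y1 by simp
    have "exp (-u) * y^3 \<le> exp(-u) * u^6" using u6 by (intro mult_left_mono) auto
    also have "\<dots> \<le> 46656" using exp_pow6_bound[OF u0] .
    finally have e: "exp (-u) \<le> 46656 / y^3" using y3 by (simp add: field_simps)
    have "\<bar>f y\<bar> \<le> (1+y) * exp (-u)" using bd[of y] y1 unfolding u_def by simp
    also have "\<dots> \<le> (2*y) * (46656 / y^3)" using y1 e
      by (intro mult_mono) auto
    also have "\<dots> = 93312 * y powr (-2)" using y1
      by (simp add: powr_minus powr_realpow field_simps power3_eq_cube power2_eq_square)
    finally show ?thesis .
  qed
  have i2: "f integrable_on {1..}"
    by (rule measurable_bounded_by_integrable_imp_integrable_real[OF meas gi bnd]) auto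
  have i3: "f integrable_on {0..}"
    by (rule integrable_Un'[OF i1 i2]) auto
  have e1: "{0<..} - {0..} = ({}::real set)" and e2: "{0..} - {0<..} = {0::real}" by auto
  show ?thesis
    using i3 by (subst integrable_spike_set_eq[of "{0<..}" "{0..}"]) (auto simp: e1 e2)
qed

definition Jf :: "real \<Rightarrow> real \<Rightarrow> real \<Rightarrow> real" where
  "Jf \<alpha> e y = exp (-(y powr (2/\<alpha>))) / (1 + e*y)"

definition J :: "real \<Rightarrow> real \<Rightarrow> real" where
  "J \<alpha> e = integral {0<..} (Jf \<alpha> e)"

lemma cont_powr_exp:
  assumes "2 < \<alpha>" shows "continuous_on {0..} (\<lambda>y::real. exp (-(y powr (2/\<alpha>))))"
proof -
  have "continuous_on {0..} (\<lambda>y::real. y powr (2/\<alpha>))"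
    using assms by (intro continuous_on_powr') (auto intro: continuous_intros)
  hence "continuous_on {0..} (\<lambda>y::real. -(y powr (2/\<alpha>)))" by (rule continuous_on_minus)
  thus ?thesis by (rule continuous_on_exp)
qed

lemma Jf_int:
  assumes "2 < \<alpha>" "\<alpha> < 4" "e \<ge> 0"
  shows "Jf \<alpha> e integrable_on {0<..}"
proof (rule base_integrable[of "2/\<alpha>"])
  show "1/2 \<le> 2/\<alpha>" using assms by (simp add: field_simps)
  have "continuous_on {0..} (\<lambda>y. exp (-(y powr (2/\<alpha>))) / (1 + e*y))"
    using assms by (intro continuous_on_divide[OF cont_powr_exp[OF assms(1)]] continuous_intros)
      (auto, smt (verit) mult_nonneg_nonneg)
  thus "continuous_on {0..} (Jf \<alpha> e)" unfolding Jf_def .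
  fix y :: real assume y: "0 \<le> y"
  have d: "1 \<le> 1 + e*y" using assms y by simp
  have "\<bar>Jf \<alpha> e y\<bar> = exp (-(y powr (2/\<alpha>))) / (1 + e*y)" using d unfolding Jf_def by simp
  also have "\<dots> \<le> exp (-(y powr (2/\<alpha>)))" using d by (simp add: divide_le_eq)
  also have "\<dots> \<le> (1+y) * exp (-(y powr (2/\<alpha>)))" using y by simp
  finally show "\<bar>Jf \<alpha> e y\<bar> \<le> (1+y) * exp (-(y powr (2/\<alpha>)))" .
qed

lemma C_int:
  assumes "2 < \<alpha>" "\<alpha> < 4"
  shows "(\<lambda>y::real. y * exp (-(y powr (2/\<alpha>)))) integrable_on {0<..}"
proof (rule base_integrable[of "2/\<alpha>"])
  show "1/2 \<le> 2/\<alpha>" using assms by (simp add: field_simps)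
  show "continuous_on {0..} (\<lambda>y. y * exp (-(y powr (2/\<alpha>))))"
    using assms by (intro continuous_on_mult[OF continuous_on_id cont_powr_exp[OF assms(1)]])
  fix y :: real assume y: "0 \<le> y"
  show "\<bar>y * exp (-(y powr (2/\<alpha>)))\<bar> \<le> (1+y) * exp (-(y powr (2/\<alpha>)))"
    using y by (simp add: abs_mult)
qed

lemma J_mono:
  assumes "2 < \<alpha>" "\<alpha> < 4" "0 \<le> e" "e \<le> e'"
  shows "J \<alpha> e' \<le> J \<alpha> e"
  unfolding J_def
proof (rule integral_le[OF Jf_int Jf_int])
  fix y :: real assume "y \<in> {0<..}"
  hence y: "y > 0" by simp
  have "1 + e*y \<le> 1 + e'*y" using assms y by (intro add_left_mono mult_right_mono) auto
  moreover have "0 < 1 + e*y" using assms y by (simp add: add_pos_nonneg)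
  ultimately show "Jf \<alpha> e' y \<le> Jf \<alpha> e y" unfolding Jf_def
    by (intro divide_left_mono) auto
qed (use assms in auto)

lemma J_pos:
  assumes "2 < \<alpha>" "\<alpha> < 4" "0 \<le> e"
  shows "J \<alpha> e > 0"
proof -
  have ci: "(Jf \<alpha> e) integrable_on {1/2..1}"
  proof -
    have "continuous_on {0..} (\<lambda>y. exp (-(y powr (2/\<alpha>))) / (1 + e*y))"
      using assms by (intro continuous_on_divide[OF cont_powr_exp[OF assms(1)]] continuous_intros)
        (auto, smt (verit) mult_nonneg_nonneg)
    hence "continuous_on {1/2..1} (Jf \<alpha> e)" unfolding Jf_def
      by (rule continuous_on_subset) auto
    thus ?thesis by (rule integrable_continuous_interval)
  qed
  have "integral {1/2..1::real} (\<lambda>y. exp (-1) / (1+e)) \<le> integral {1/2..1} (Jf \<alpha> e)"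
  proof (rule integral_le[OF _ ci])
    fix y :: real assume "y \<in> {1/2..1}"
    hence y: "1/2 \<le> y" "y \<le> 1" by auto
    have "y powr (2/\<alpha>) \<le> 1" using y assms by (intro powr_le1) auto
    hence a: "exp (-1) \<le> exp (-(y powr (2/\<alpha>)))" by simp
    have b: "1 + e*y \<le> 1 + e" using y assms by (simp add: mult_left_le)
    have c: "0 < 1 + e*y" using assms y by (simp add: add_pos_nonneg)
    have "exp (-1) / (1+e) \<le> exp (-(y powr (2/\<alpha>))) / (1+e)"
      using a assms by (intro divide_right_mono) auto
    also have "\<dots> \<le> exp (-(y powr (2/\<alpha>))) / (1+e*y)"
      using b c by (intro divide_left_mono) auto
    finally show "exp (-1) / (1+e) \<le> Jf \<alpha> e y" unfolding Jf_def .
  qed auto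
  moreover have "integral {1/2..1::real} (\<lambda>y. exp (-1) / (1+e)) > 0"
    using assms by simp
  moreover have "integral {1/2..1} (Jf \<alpha> e) \<le> J \<alpha> e"
    unfolding J_def
  proof (rule integral_subset_le[OF _ ci Jf_int])
    show "\<forall>y\<in>{0<..}. 0 \<le> Jf \<alpha> e y" using assms
      unfolding Jf_def by (auto intro!: divide_nonneg_pos add_pos_nonneg)
  qed (use assms in auto)
  ultimately show ?thesis by linarith
qed

lemma J_cont:
  assumes "2 < \<alpha>" "\<alpha> < 4" "0 \<le> e"
  shows "J \<alpha> 0 - J \<alpha> e \<le> e * integral {0<..} (\<lambda>y. y * exp (-(y powr (2/\<alpha>))))"
proof -
  have "J \<alpha> 0 - J \<alpha> e = integral {0<..} (\<lambda>y. Jf \<alpha> 0 y - Jf \<alpha> e y)"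
    unfolding J_def using assms by (intro integral_diff[symmetric] Jf_int) auto
  also have "\<dots> \<le> integral {0<..} (\<lambda>y. e * (y * exp (-(y powr (2/\<alpha>)))))"
  proof (rule integral_le)
    show "(\<lambda>y. Jf \<alpha> 0 y - Jf \<alpha> e y) integrable_on {0<..}"
      using assms by (intro integrable_diff Jf_int) auto
    show "(\<lambda>y. e * (y * exp (-(y powr (2/\<alpha>))))) integrable_on {0<..}"
      using integrable_cmul[OF C_int[OF assms(1,2)], of e] by simp
    fix y :: real assume "y \<in> {0<..}"
    hence y: "y > 0" by simp
    have c: "0 < 1 + e*y" using assms y by (simp add: add_pos_nonneg)
    define E where "E = exp (-(y powr (2/\<alpha>)))"
    have E: "E > 0" unfolding E_def by simp
    have "Jf \<alpha> 0 y - Jf \<alpha> e y = E * (e*y) / (1+e*y)"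
      unfolding Jf_def E_def[symmetric] using c by (simp add: field_simps)
    also have "\<dots> \<le> E * (e*y) / 1" using c E assms y
      by (intro divide_left_mono) auto
    finally show "Jf \<alpha> 0 y - Jf \<alpha> e y \<le> e * (y * exp (-(y powr (2/\<alpha>))))"
      unfolding E_def by (simp add: mult_ac)
  qed
  also have "\<dots> = e * integral {0<..} (\<lambda>y. y * exp (-(y powr (2/\<alpha>))))"
    by simp
  finally show ?thesis .
qed

lemma vr_scale:
  assumes "2 < \<alpha>" "\<alpha> < 4" "s > 0"
  shows "vr_integral \<alpha> s = s powr (-(\<alpha>/2)) * J \<alpha> (s powr (-(\<alpha>/2)))"
proof -
  define a where "a = s powr (-(\<alpha>/2))"
  have a0: "a > 0" unfolding a_def using assms by simp
  define f where "f = (\<lambda>x::real. exp (- s * x powr (2 / \<alpha>)) / (1 + x))"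
  have "a powr (2/\<alpha>) = s powr (-(\<alpha>/2) * (2/\<alpha>))" unfolding a_def
    by (rule powr_powr)
  also have "-(\<alpha>/2) * (2/\<alpha>) = -1" using assms by simp
  finally have ap: "a powr (2/\<alpha>) = 1/s" using assms by (simp add: powr_minus_divide)
  have eq: "\<bar>a\<bar> * f (a*y) = a * Jf \<alpha> a y" if "y \<in> {0<..}" for y
  proof -
    have "(a*y) powr (2/\<alpha>) = a powr (2/\<alpha>) * y powr (2/\<alpha>)"
      using a0 that by (simp add: powr_mult)
    hence "s * (a*y) powr (2/\<alpha>) = y powr (2/\<alpha>)" using ap assms by simp
    thus ?thesis unfolding f_def Jf_def using a0 by (simp add: mult.commute)
  qed
  have ia: "(\<lambda>y. a * Jf \<alpha> a y) integrable_on {0<..}"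
    using integrable_cmul[OF Jf_int[OF assms(1,2), of a], of a] a0 by simp
  have ab: "(\<lambda>y. a * Jf \<alpha> a y) absolutely_integrable_on {0<..}"
  proof (rule nonnegative_absolutely_integrable_1[OF ia])
    fix y :: real assume "y \<in> {0<..}" thus "0 \<le> a * Jf \<alpha> a y" using a0
      unfolding Jf_def by (auto intro!: divide_nonneg_pos add_pos_nonneg)
  qed
  have ab2: "(\<lambda>y. \<bar>a\<bar> * f (a*y)) absolutely_integrable_on {0<..}"
    using ab unfolding absolutely_integrable_on_def
    using integrable_cong[of "{0<..}" "\<lambda>y. \<bar>a\<bar> * f (a*y)" "\<lambda>y. a * Jf \<alpha> a y"] eq
      integrable_cong[of "{0<..}" "\<lambda>y. norm (\<bar>a\<bar> * f (a*y))" "\<lambda>y. norm (a * Jf \<alpha> a y)"]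
    by simp
  have int2: "integral {0<..} (\<lambda>y. \<bar>a\<bar> * f (a*y)) = a * J \<alpha> a"
    unfolding J_def by (subst integral_cong[OF eq]) auto
  have img: "(\<lambda>y. a*y) ` {0<..} = {0<..}"
  proof
    show "(\<lambda>y. a*y) ` {0<..} \<subseteq> {0<..}" using a0 by auto
    show "{0<..} \<subseteq> (\<lambda>y. a*y) ` {0<..}"
    proof
      fix x :: real assume "x \<in> {0<..}"
      hence "x = a * (x/a)" "x/a \<in> {0<..}" using a0 by auto
      thus "x \<in> (\<lambda>y. a*y) ` {0<..}" by blast
    qed
  qed
  have "f absolutely_integrable_on ((\<lambda>y. a*y) ` {0<..}) \<and> integral ((\<lambda>y. a*y) ` {0<..}) f = a * J \<alpha> a"
  proof (rule has_absolute_integral_change_of_variables_1'[THEN iffD1])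
    show "{0::real<..} \<in> sets lebesgue" by simp
    show "((\<lambda>y. a*y) has_field_derivative a) (at x within {0<..})" for x
      by (auto intro!: derivative_eq_intros)
    show "inj_on (\<lambda>y. a*y) {0<..}" using a0 by (auto simp: inj_on_def)
  qed (use ab2 int2 in auto)
  hence "integral {0<..} f = a * J \<alpha> a" unfolding img by simp
  thus ?thesis unfolding vr_integral_def f_def a_def by simp
qed

definition T :: "real \<Rightarrow> real \<Rightarrow> real \<Rightarrow> real" where
  "T b L K = L * (L+K) powr (-b)"

lemma T_deriv:
  assumes "x + K > 0"
  shows "((\<lambda>x. T b x K) has_field_derivative (x+K) powr (-b-1) * (K - (b-1)*x)) (at x)"
proof -
  have d1: "((\<lambda>x. x + K) has_field_derivative 1) (at x)"
    by (auto intro!: derivative_eq_intros)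
  have dd: "((\<lambda>x. (x+K) powr (-b)) has_field_derivative (-b) * (x+K) powr (-b - of_nat 1) * 1) (at x)"
    by (rule DERIV_fun_powr[OF d1]) (use assms in simp)
  have eqp: "(x+K) powr (-b) = (x+K) * (x+K) powr (-b-1)"
    using assms powr_add[of "x+K" 1 "-b-1"] by simp
  show ?thesis unfolding T_def
    by (rule DERIV_cong[OF DERIV_mult[OF DERIV_ident dd]]) (subst eqp, simp add: algebra_simps)
qed

lemma T_cont:
  assumes "K > 0" "0 \<le> L"
  shows "continuous_on {L..L'} (\<lambda>x. T b x K)"
proof (rule continuous_at_imp_continuous_on, intro ballI)
  fix x assume "x \<in> {L..L'}"
  hence "x + K > 0" using assms by auto
  from T_deriv[OF this] show "isCont (\<lambda>x. T b x K) x" by (rule DERIV_isCont)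
qed

lemma T_strict_inc:
  assumes "1 < b" "K > 0" "0 \<le> L" "L < L'" "L' \<le> K/(b-1)"
  shows "T b L K < T b L' K"
proof (rule DERIV_pos_imp_increasing_open[OF assms(4) _ T_cont[OF assms(2,3)]])
  fix x assume x: "L < x" "x < L'"
  hence xK: "x + K > 0" using assms by auto
  have "(b-1)*x < (b-1)*(K/(b-1))" using x assms by (intro mult_strict_left_mono) auto
  hence "(b-1)*x < K" using assms by simp
  hence "(x+K) powr (-b-1) * (K - (b-1)*x) > 0" using xK by simp
  with T_deriv[OF xK] show "\<exists>y. ((\<lambda>x. T b x K) has_real_derivative y) (at x) \<and> 0 < y" by blast
qed

lemma T_strict_dec:
  assumes "1 < b" "K > 0" "K/(b-1) \<le> L" "L < L'"
  shows "T b L' K < T b L K"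
proof (rule DERIV_neg_imp_decreasing_open[OF assms(4) _ T_cont[OF assms(2)]])
  show "0 \<le> L" using assms by (smt (verit) divide_pos_pos)
  fix x assume x: "L < x" "x < L'"
  hence xK: "x + K > 0" using assms by (smt (verit) divide_pos_pos)
  have "(b-1)*x > (b-1)*(K/(b-1))" using x assms by (intro mult_strict_left_mono) auto
  hence "(b-1)*x > K" using assms by simp
  hence "(x+K) powr (-b-1) * (K - (b-1)*x) < 0" using xK by (simp add: mult_pos_neg)
  with T_deriv[OF xK] show "\<exists>y. ((\<lambda>x. T b x K) has_real_derivative y) (at x) \<and> y < 0" by blast
qed

lemma P_eq:
  assumes "2 < \<alpha>" "\<alpha> < 4" "L + K > 0"
  shows "L * vr_integral \<alpha> (L+K) = T (\<alpha>/2) L K * J \<alpha> ((L+K) powr (-(\<alpha>/2)))"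
  using vr_scale[OF assms] unfolding T_def by simp

lemma P_pos:
  assumes "2 < \<alpha>" "\<alpha> < 4" "L > 0" "K \<ge> 0"
  shows "L * vr_integral \<alpha> (L+K) > 0"
proof -
  have "L + K > 0" using assms by simp
  have "T (\<alpha>/2) L K > 0" unfolding T_def using assms by simp
  moreover have "J \<alpha> ((L+K) powr (-(\<alpha>/2))) > 0" using J_pos[OF assms(1,2)] by simp
  ultimately show ?thesis using P_eq[OF assms(1,2) \<open>L+K>0\<close>] by simp
qed

lemma P_inc:
  assumes "2 < \<alpha>" "\<alpha> < 4" "K > 0" "0 \<le> L" "L < L'" "L' \<le> K * (2/(\<alpha>-2))"
  shows "L * vr_integral \<alpha> (L+K) < L' * vr_integral \<alpha> (L'+K)"
proof -
  have b: "1 < \<alpha>/2" using assms by simp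
  have kb: "K/(\<alpha>/2-1) = K * (2/(\<alpha>-2))" using assms by (simp add: field_simps)
  have Tl: "T (\<alpha>/2) L K < T (\<alpha>/2) L' K"
    using T_strict_inc[OF b assms(3,4,5)] assms(6) kb by simp
  have T0: "T (\<alpha>/2) L K \<ge> 0" unfolding T_def using assms by simp
  have pp: "(L'+K) powr (-(\<alpha>/2)) \<le> (L+K) powr (-(\<alpha>/2))"
    using assms by (intro powr_mono2') auto
  have Jm: "J \<alpha> ((L+K) powr (-(\<alpha>/2))) \<le> J \<alpha> ((L'+K) powr (-(\<alpha>/2)))"
    using J_mono[OF assms(1,2) _ pp] by simp
  have Jp: "J \<alpha> ((L+K) powr (-(\<alpha>/2))) > 0" using J_pos[OF assms(1,2)] by simp
  have "T (\<alpha>/2) L K * J \<alpha> ((L+K) powr (-(\<alpha>/2))) < T (\<alpha>/2) L' K * J \<alpha> ((L+K) powr (-(\<alpha>/2)))"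
    using Tl Jp by simp
  also have "\<dots> \<le> T (\<alpha>/2) L' K * J \<alpha> ((L'+K) powr (-(\<alpha>/2)))"
    using Jm Tl T0 by (intro mult_left_mono) auto
  finally show ?thesis using P_eq[OF assms(1,2)] assms by simp
qed

lemma BR:
  assumes "2 < \<alpha>" "\<alpha> < 4" "K > 0" "N > 0" "0 \<le> L0" "L0 \<le> N"
    and mx: "\<And>M. M \<in> {0..N} \<Longrightarrow> M * vr_integral \<alpha> (M+K) \<le> L0 * vr_integral \<alpha> (L0+K)"
  shows "min N (K * (2/(\<alpha>-2))) \<le> L0"
proof (rule ccontr)
  assume "\<not> ?thesis"
  hence lt: "L0 < min N (K * (2/(\<alpha>-2)))" by (meson not_le)
  have "L0 * vr_integral \<alpha> (L0+K) < min N (K * (2/(\<alpha>-2))) * vr_integral \<alpha> (min N (K * (2/(\<alpha>-2)))+K)"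
    using lt assms by (intro P_inc) auto
  moreover have "min N (K * (2/(\<alpha>-2))) \<in> {0..N}" using assms by auto
  ultimately show False using mx by fastforce
qed

lemma eq_facts:
  assumes a: "2 < \<alpha>" "\<alpha> < 4" and c: "1 \<le> c" and N: "N > 0"
    and nash: "vr_nash \<alpha> N (c * N) E1 E2"
  shows "E1 = N \<and> min (c*N) (N * (2/(\<alpha>-2))) \<le> E2 \<and> E2 \<le> c*N \<and>
         (\<forall>M\<in>{0..c*N}. M * vr_integral \<alpha> (M+N) \<le> E2 * vr_integral \<alpha> (E2+N))"
proof -
  define m0 where "m0 = 2/(\<alpha>-2)"
  have m0: "m0 > 1" unfolding m0_def using a by (simp add: field_simps)
  from nash have h1: "0 \<le> E1" "E1 \<le> N" and h2: "0 \<le> E2" "E2 \<le> c*N"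
    and mx1: "\<And>M. M \<in> {0..N} \<Longrightarrow> M * vr_integral \<alpha> (M+E2) \<le> E1 * vr_integral \<alpha> (E1+E2)"
    and mx2: "\<And>M. M \<in> {0..c*N} \<Longrightarrow> M * vr_integral \<alpha> (M+E1) \<le> E2 * vr_integral \<alpha> (E2+E1)"
    unfolding vr_nash_def vr_U1_def vr_U2_def by (auto simp: add.commute)
  have cN: "c*N \<ge> N" using c N by simp
  have E2p: "E2 > 0"
  proof (rule ccontr)
    assume "\<not> E2 > 0" hence "E2 = 0" using h2 by simp
    moreover have "c*N * vr_integral \<alpha> (c*N+E1) > 0" using a c N h1 by (intro P_pos) auto
    ultimately show False using mx2[of "c*N"] c N by auto
  qed
  have E1p: "E1 > 0"
  proof (rule ccontr)
    assume "\<not> E1 > 0" hence "E1 = 0" using h1 by simp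
    moreover have "N * vr_integral \<alpha> (N+E2) > 0" using a N h2 by (intro P_pos) auto
    ultimately show False using mx1[of N] N by auto
  qed
  have br1: "min N (E2 * m0) \<le> E1" unfolding m0_def
    by (rule BR[OF a E2p N h1 mx1])
  have br2: "min (c*N) (E1 * m0) \<le> E2" unfolding m0_def
    using c N by (intro BR[OF a E1p _ h2 mx2]) auto
  have E1N: "E1 = N"
  proof (rule ccontr)
    assume "E1 \<noteq> N" hence lt: "E1 < N" using h1 by simp
    hence "E2 * m0 \<le> E1" using br1 by linarith
    moreover have "E2 < E2 * m0" using E2p m0 by simp
    ultimately have "E2 < E1" by linarith
    hence "E2 < c*N" using lt cN by linarith
    hence "E1 * m0 \<le> E2" using br2 by linarith
    moreover have "E1 < E1 * m0" using E1p m0 by simp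
    ultimately show False using \<open>E2 < E1\<close> by linarith
  qed
  have "min (c*N) (N * (2/(\<alpha>-2))) \<le> E2" using br2 E1N unfolding m0_def by simp
  moreover have "\<forall>M\<in>{0..c*N}. M * vr_integral \<alpha> (M+N) \<le> E2 * vr_integral \<alpha> (E2+N)"
    using mx2 E1N by simp
  ultimately show ?thesis using E1N h2 by simp
qed

lemma T_scale:
  assumes "N > 0" "x \<ge> 0"
  shows "T b (x*N) N = T b x 1 * (N * N powr (-b))"
proof -
  have "(x*N + N) powr (-b) = (x+1) powr (-b) * N powr (-b)"
    using assms powr_mult[of "x+1" N "-b"] by (simp add: algebra_simps)
  thus ?thesis unfolding T_def by simp
qed

lemma upper:
  assumes a: "2 < \<alpha>" "\<alpha> < 4" and am: "2/(\<alpha>-2) < A" and mc: "2/(\<alpha>-2) \<le> c"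
    and H: "\<And>N. N > 0 \<Longrightarrow> 0 \<le> E2 N \<and>
        (\<forall>M\<in>{0..c*N}. M * vr_integral \<alpha> (M+N) \<le> E2 N * vr_integral \<alpha> (E2 N + N))"
  shows "eventually (\<lambda>N. E2 N / N < A) at_top"
proof -
  define m0 where "m0 = 2/(\<alpha>-2)"
  define b where "b = \<alpha>/2"
  have b1: "1 < b" unfolding b_def using a by simp
  have m0p: "m0 > 0" unfolding m0_def using a by simp
  have bm: "1/(b-1) = m0" unfolding b_def m0_def using a by (simp add: field_simps)
  have bmN: "N/(b-1) = N*m0" for N using bm by (metis times_divide_eq_right mult_1_right)
  define \<phi> where "\<phi> x = T b x 1" for x
  have phlt: "\<phi> A < \<phi> m0" unfolding \<phi>_def
    by (rule T_strict_dec[OF b1]) (use bm am m0_def in auto)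
  have php: "\<phi> m0 > 0" unfolding \<phi>_def T_def using m0p by simp
  define J0 where "J0 = J \<alpha> 0"
  have J0p: "J0 > 0" unfolding J0_def using J_pos[OF a] by simp
  define C where "C = integral {0<..} (\<lambda>y::real. y * exp (-(y powr (2/\<alpha>))))"
  have C0: "C \<ge> 0" unfolding C_def by (rule integral_nonneg[OF C_int[OF a]]) auto
  define \<eta> where "\<eta> = (\<phi> m0 - \<phi> A) * J0 / ((C+1) * \<phi> m0)"
  have \<eta>p: "\<eta> > 0" unfolding \<eta>_def using phlt J0p C0 php by (intro divide_pos_pos mult_pos_pos) auto
  define aN where "aN N = ((m0+1)*N) powr (-b)" for N
  have "filterlim (\<lambda>N. (m0+1)*N) at_top at_top"
    using m0p by (intro filterlim_tendsto_pos_mult_at_top[OF tendsto_const] filterlim_ident) auto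
  hence "(aN \<longlongrightarrow> 0) at_top" unfolding aN_def using b1 by (intro tendsto_neg_powr) auto
  hence ev: "eventually (\<lambda>N. aN N < \<eta>) at_top" using \<eta>p by (rule order_tendstoD)
  show ?thesis
    using ev eventually_gt_at_top[of 0]
  proof eventually_elim
    case (elim N)
    hence N: "N > 0" and aNl: "aN N < \<eta>" by auto
    show "E2 N / N < A"
    proof (rule ccontr)
      assume "\<not> E2 N / N < A"
      hence ge: "A * N \<le> E2 N" using N by (simp add: field_simps)
      from H[OF N] have E0: "0 \<le> E2 N" and mx: "\<And>M. M\<in>{0..c*N} \<Longrightarrow>
          M * vr_integral \<alpha> (M+N) \<le> E2 N * vr_integral \<alpha> (E2 N + N)" by auto
      define Q where "Q = N * N powr (-b)"
      have Qp: "Q > 0" unfolding Q_def using N by simp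
      have Ap: "A > 0" using am m0p unfolding m0_def by linarith
      have TE: "T b (E2 N) N \<le> T b (A*N) N"
      proof (cases "E2 N = A*N")
        case False
        hence "A*N < E2 N" using ge by simp
        moreover have "N/(b-1) \<le> A*N"
        proof -
          have "N*m0 \<le> N*A" using am N unfolding m0_def by (intro mult_left_mono) auto
          thus ?thesis using bmN[of N] by (simp add: mult.commute)
        qed
        ultimately show ?thesis using T_strict_dec[OF b1 N] by fastforce
      qed simp
      have T0: "T b (E2 N) N \<ge> 0" unfolding T_def using E0 N by simp
      have JE: "J \<alpha> ((E2 N + N) powr (-b)) \<le> J0"
        unfolding J0_def by (rule J_mono[OF a]) auto
      have "E2 N * vr_integral \<alpha> (E2 N + N) = T b (E2 N) N * J \<alpha> ((E2 N + N) powr (-b))"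
        unfolding b_def using P_eq[OF a] E0 N by simp
      also have "\<dots> \<le> T b (A*N) N * J0"
        using TE T0 JE J0p J_pos[OF a, of "(E2 N + N) powr (-b)"] by (intro mult_mono) auto
      also have "\<dots> = \<phi> A * Q * J0" unfolding \<phi>_def Q_def using T_scale[OF N, of A b] Ap by simp
      finally have PE: "E2 N * vr_integral \<alpha> (E2 N + N) \<le> \<phi> A * Q * J0" .
      have "m0*N + N = (m0+1)*N" by (simp add: algebra_simps)
      hence "(m0*N) * vr_integral \<alpha> (m0*N + N) = T b (m0*N) N * J \<alpha> (aN N)"
        unfolding b_def aN_def using P_eq[OF a, of "m0*N" N] m0p N by simp
      also have "\<dots> = \<phi> m0 * Q * J \<alpha> (aN N)"
        unfolding \<phi>_def Q_def using T_scale[OF N, of m0 b] m0p by simp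
      finally have Pm: "(m0*N) * vr_integral \<alpha> (m0*N + N) = \<phi> m0 * Q * J \<alpha> (aN N)" .
      have "m0*N \<le> c*N" using mc N unfolding m0_def by (intro mult_right_mono) auto
      hence "m0*N \<in> {0..c*N}" using m0p N by auto
      from mx[OF this] Pm PE have "\<phi> m0 * Q * J \<alpha> (aN N) \<le> \<phi> A * Q * J0" by simp
      hence ineq: "\<phi> m0 * J \<alpha> (aN N) \<le> \<phi> A * J0" using Qp
        by (simp add: mult.commute mult.left_commute)
      have aN0: "aN N \<ge> 0" unfolding aN_def by simp
      have "J0 - J \<alpha> (aN N) \<le> aN N * C"
        unfolding J0_def C_def using J_cont[OF a aN0] .
      hence Jl: "J0 - aN N * C \<le> J \<alpha> (aN N)" by simp
      have "aN N * C * \<phi> m0 \<le> aN N * (C+1) * \<phi> m0"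
        using aN0 php by (intro mult_right_mono mult_left_mono) auto
      also have "\<dots> < \<eta> * (C+1) * \<phi> m0"
        using aNl C0 php by (intro mult_strict_right_mono) auto
      also have "\<dots> = (\<phi> m0 - \<phi> A) * J0"
      proof -
        have nz: "(C+1) * \<phi> m0 \<noteq> 0" using C0 php by simp
        have "\<eta> * (C+1) * \<phi> m0 = \<eta> * ((C+1) * \<phi> m0)" by (simp add: mult.assoc)
        also have "\<dots> = (\<phi> m0 - \<phi> A) * J0" unfolding \<eta>_def using nz by simp
        finally show ?thesis .
      qed
      finally have k: "aN N * C * \<phi> m0 < (\<phi> m0 - \<phi> A) * J0" .
      have "\<phi> m0 * (J0 - aN N * C) \<le> \<phi> m0 * J \<alpha> (aN N)"
        using Jl php by (intro mult_left_mono) auto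
      with ineq k show False by (simp add: algebra_simps)
    qed
  qed
qed

theorem theorem7:
  fixes \<alpha> c :: real and E1 E2 :: "real \<Rightarrow> real"
  assumes "2 < \<alpha>" and "\<alpha> < 4" and "1 \<le> c"
    and "\<And>N1. N1 > 0 \<Longrightarrow> vr_nash \<alpha> N1 (c * N1) (E1 N1) (E2 N1)"
  shows "(\<forall>\<^sub>F N1 in at_top. E1 N1 = N1)
       \<and> ((\<lambda>N1. E2 N1 / N1) \<longlongrightarrow> min c (2 / (\<alpha> - 2))) at_top"
proof -
  define m0 where "m0 = 2/(\<alpha>-2)"
  have m0p: "m0 > 0" unfolding m0_def using assms by simp
  have F: "E1 N = N \<and> min (c*N) (N * m0) \<le> E2 N \<and> E2 N \<le> c*N \<and>
         (\<forall>M\<in>{0..c*N}. M * vr_integral \<alpha> (M+N) \<le> E2 N * vr_integral \<alpha> (E2 N+N))"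
    if N: "N > 0" for N
    unfolding m0_def by (rule eq_facts[OF assms(1,2,3) N assms(4)[OF N]])
  have A: "\<forall>\<^sub>F N1 in at_top. E1 N1 = N1"
    using eventually_gt_at_top[of "0::real"] by eventually_elim (use F in auto)
  have B: "((\<lambda>N1. E2 N1 / N1) \<longlongrightarrow> min c m0) at_top"
  proof (cases "c \<le> m0")
    case True
    have "\<forall>\<^sub>F N in at_top. E2 N / N = min c m0"
      using eventually_gt_at_top[of "0::real"]
    proof eventually_elim
      case (elim N)
      have "c*N \<le> N*m0" using True elim by (simp add: mult.commute mult_right_mono)
      hence "E2 N = c*N" using F[OF elim] by linarith
      thus ?case using elim True by simp
    qed
    thus ?thesis by (rule tendsto_eventually)
  next
    case False
    hence mc: "min c m0 = m0" by simp
    show ?thesis unfolding mc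
    proof (rule order_tendstoI)
      fix x assume x: "x < m0"
      show "\<forall>\<^sub>F N in at_top. x < E2 N / N"
        using eventually_gt_at_top[of "0::real"]
      proof eventually_elim
        case (elim N)
        have "N*m0 \<le> c*N" using False elim by (simp add: mult.commute mult_right_mono)
        hence "N*m0 \<le> E2 N" using F[OF elim] by linarith
        hence "m0 \<le> E2 N / N" using elim by (simp add: field_simps)
        thus ?case using x by linarith
      qed
    next
      fix x assume x: "m0 < x"
      show "\<forall>\<^sub>F N in at_top. E2 N / N < x"
      proof (rule upper[OF assms(1,2)])
        show "2/(\<alpha>-2) < x" using x m0_def by simp
        show "2/(\<alpha>-2) \<le> c" using False m0_def by simp
        fix N :: real assume N: "N > 0"
        have "0 \<le> min (c*N) (N*m0)" using N m0p assms(3) by simp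
        thus "0 \<le> E2 N \<and> (\<forall>M\<in>{0..c*N}. M * vr_integral \<alpha> (M+N) \<le> E2 N * vr_integral \<alpha> (E2 N + N))"
          using F[OF N] by linarith
      qed
    qed
  qed
  show ?thesis using A B unfolding m0_def by simp
qed

end
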